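(* Let $A, B, C \in \mathbb{Z}$ with $A > 0$, $C > 0$, $B < 0$, $2A + B > 0$ and $A + B + C > 0$, suppose the polynomial $Ax^2 + Bx + C$ is irreducible, and let $\beta$ be a real root of it. Then there exists $\alpha \in \mathbb{R}$ with $p_\beta(\alpha) = \infty$.
   Context: For $\beta, \alpha \in \mathbb{C}$, $p_\beta(\alpha) \in \mathbb{Z}_{\geq 0}\cup\{\infty\}$ is the number of polynomials $f \in \mathbb{Z}_{\geq 0}[x]$ (non-negative integer coefficients) with $f(\beta) = \alpha$. *)

theory Defs
  imports Complex_Main "HOL-Computational_Algebra.Polynomial" "HOL-Library.Extended_Nat"
begin

definition nn_polys_at :: "complex \<Rightarrow> complex \<Rightarrow> nat poly set" where
  "nn_polys_at \<beta> \<alpha> = {f. poly (map_poly of_nat f) \<beta> = \<alpha>}"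

definition p_count :: "complex \<Rightarrow> complex \<Rightarrow> enat" where
  "p_count \<beta> \<alpha> = (if finite (nn_polys_at \<beta> \<alpha>) then enat (card (nn_polys_at \<beta> \<alpha>)) else \<infinity>)"

end

theory Submission
  imports Defs
begin

lemma geo: "(1 - x) * (\<Sum>i<n. x^(i+1)) = x - x^(n+1)" for x :: "'a::comm_ring_1"
proof (induction n)
  case 0 then show ?case by simp
next
  case (Suc n)
  have "(1 - x) * (\<Sum>i<Suc n. x^(i+1)) = (1 - x) * (\<Sum>i<n. x^(i+1)) + (1-x) * x^(n+1)"
    by (simp add: algebra_simps)
  also have "\<dots> = x - x^(Suc n + 1)" using Suc.IH by (simp add: algebra_simps)
  finally show ?case .
qed

lemma key_alg:
  fixes x A b C S1 S2 G p n IH :: "'a::comm_ring_1"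
  assumes "C + (C - b + n) * x + (A + C - b - 1) * S1 + (2*A - b) * p = (1 - x) * (S2 + A * p)"
    and "(1 - x) * G = x - p"
    and "p * (C - b*x + A*x^2) = 0"
  shows "C + (C - b + (n+1)) * x + (A + C - b - 1) * (S1 + p) + (2*A - b) * (p*x)
     = (1 - x) * ((S2 + G) + A * (p*x))"
proof -
  have "C + (C - b + (n+1)) * x + (A + C - b - 1) * (S1 + p) + (2*A - b) * (p*x)
      = (C + (C - b + n) * x + (A + C - b - 1) * S1 + (2*A - b) * p) + x + (A + C - b - 1)*p
         + (2*A - b) * (p*x) - (2*A-b)*p" by (simp add: algebra_simps)
  also have "\<dots> = (1 - x) * (S2 + A * p) + x + (A + C - b - 1)*p + (2*A - b) * (p*x) - (2*A-b)*p"
    using assms(1) by simp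
  also have "\<dots> = (1 - x) * ((S2 + G) + A * (p*x)) - (1-x)*G + x - p + p * (C - b*x + A*x^2)"
    by (simp add: algebra_simps power2_eq_square)
  also have "\<dots> = (1 - x) * ((S2 + G) + A * (p*x))" using assms(2,3) by simp
  finally show ?thesis .
qed

lemma key:
  fixes x A b C :: "'a::comm_ring_1"
  assumes h: "C - b*x + A*x^2 = 0"
  shows "C + (C - b + of_nat n) * x + (A + C - b - 1) * (\<Sum>i\<in>{2..n+1}. x^i) + (2*A - b) * x^(n+2)
     = (1 - x) * ((\<Sum>j\<in>{1..n}. \<Sum>i<j. x^(i+1)) + A * x^(n+2))"
proof (induction n)
  case 0
  have "(1 + x) * (C - b*x + A*x^2) = 0" using h by simp
  then show ?case by (simp add: algebra_simps power2_eq_square power3_eq_cube numeral_3_eq_3)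
next
  case (Suc n)
  have h2: "x^(n+2) * (C - b*x + A*x^2) = 0" using h by simp
  have g: "(1 - x) * (\<Sum>i<Suc n. x^(i+1)) = x - x^(n+2)" using geo[of x "Suc n"] by simp
  have s1: "(\<Sum>i\<in>{2..Suc n+1}. x^i) = (\<Sum>i\<in>{2..n+1}. x^i) + x^(n+2)" by simp
  have s2: "(\<Sum>j\<in>{1..Suc n}. \<Sum>i<j. x^(i+1)) = (\<Sum>j\<in>{1..n}. \<Sum>i<j. x^(i+1)) + (\<Sum>i<Suc n. x^(i+1))" by simp
  have e3: "x^(Suc n + 2) = x^(n+2) * x" by simp
  show ?case unfolding s1 s2 e3 of_nat_Suc
    using key_alg[OF Suc.IH g h2] by (simp add: add.commute)
qed

definition ev :: "complex \<Rightarrow> nat poly \<Rightarrow> complex" where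
  "ev x p = poly (map_poly of_nat p) x"

lemma ev_add: "ev x (p + q) = ev x p + ev x q"
proof -
  have "map_poly (of_nat :: nat \<Rightarrow> complex) (p + q) = map_poly of_nat p + map_poly of_nat q"
    by (intro poly_eqI) (simp add: coeff_map_poly)
  then show ?thesis by (simp add: ev_def)
qed

lemma ev_0: "ev x 0 = 0" by (simp add: ev_def)

lemma ev_sum: "finite I \<Longrightarrow> ev x (\<Sum>i\<in>I. p i) = (\<Sum>i\<in>I. ev x (p i))"
  by (induction I rule: finite_induct) (simp_all add: ev_add ev_0)

lemma ev_monom: "ev x (monom c n) = of_nat c * x^n"
  by (simp add: ev_def map_poly_monom poly_monom)

lemma ev_pCons0: "ev x (pCons 0 p) = x * ev x p"
  by (simp add: ev_def map_poly_pCons)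

theorem lemma6:
  fixes A B C :: int and \<beta> :: real
  assumes "A > 0" "C > 0" "B < 0" "2 * A + B > 0" "A + B + C > 0"
    and "irreducible [:rat_of_int C, rat_of_int B, rat_of_int A:]"
    and "real_of_int A * \<beta>^2 + real_of_int B * \<beta> + real_of_int C = 0"
  shows "\<exists>\<alpha>::real. p_count (complex_of_real \<beta>) (complex_of_real \<alpha>) = \<infinity>"
proof -
  define x where "x = complex_of_real \<beta>"
  define a where "a = nat A"
  define L where "L = nat (- B)"
  define c where "c = nat C"
  define d where "d = nat (A + B + C) - 1"
  define e where "e = nat (2 * A + B)"
  define Q :: "nat poly" where "Q = (\<Sum>j\<in>{1..L}. \<Sum>i<j. monom 1 (i+1)) + monom a (L+2)"
  define Q' :: "nat poly" where "Q' = monom c 0 + (monom c 1 + (\<Sum>i\<in>{2..L+1}. monom d i) + monom e (L+2))"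
  have h: "of_int C - of_int (-B) * x + of_int A * x^2 = (0::complex)"
  proof -
    have "complex_of_real (real_of_int A * \<beta>^2 + real_of_int B * \<beta> + real_of_int C) = 0"
      using assms(7) by simp
    then show ?thesis unfolding x_def by (simp add: algebra_simps)
  qed
  note k = key[OF h, of L]
  have cL: "(of_nat L :: complex) = of_int (-B)" using assms(3) unfolding L_def
    by (metis of_int_of_nat_eq int_nat_eq less_le not_less neg_0_less_iff_less)
  have ca: "(of_nat a :: complex) = of_int A" using assms(1) unfolding a_def
    by (metis of_int_of_nat_eq int_nat_eq less_le)
  have cc: "(of_nat c :: complex) = of_int C" using assms(2) unfolding c_def
    by (metis of_int_of_nat_eq int_nat_eq less_le)
  have cd: "(of_nat d :: complex) = of_int A + of_int C - of_int (-B) - 1" using assms(5) unfolding d_def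
  proof -
    have "int (nat (A + B + C) - 1) = A + B + C - 1" using assms(5) by linarith
    then have "(of_nat (nat (A + B + C) - 1) :: complex) = of_int (A + B + C - 1)"
      by (metis of_int_of_nat_eq)
    then show "(of_nat (nat (A + B + C) - 1) :: complex) = of_int A + of_int C - of_int (-B) - 1"
      by simp
  qed
  have ce: "(of_nat e :: complex) = 2 * of_int A - of_int (-B)" using assms(4) unfolding e_def
  proof -
    have "int (nat (2 * A + B)) = 2 * A + B" using assms(4) by linarith
    then have "(of_nat (nat (2 * A + B)) :: complex) = of_int (2 * A + B)"
      by (metis of_int_of_nat_eq)
    then show "(of_nat (nat (2 * A + B)) :: complex) = 2 * of_int A - of_int (-B)" by simp
  qed
  have evQ: "ev x Q = (\<Sum>j\<in>{1..L}. \<Sum>i<j. x^(i+1)) + of_int A * x^(L+2)"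
    unfolding Q_def by (simp add: ev_add ev_sum ev_monom ca)
  have evQ': "ev x Q' = of_int C + of_int C * x + (of_int A + of_int C - of_int (-B) - 1) * (\<Sum>i\<in>{2..L+1}. x^i)
      + (2 * of_int A - of_int (-B)) * x^(L+2)"
  proof -
    have "ev x (\<Sum>i\<in>{2..L+1}. monom d i) = of_nat d * (\<Sum>i\<in>{2..L+1}. x^i)"
      by (simp only: ev_sum[OF finite_atLeastAtMost] ev_monom sum_distrib_left)
    then show ?thesis unfolding Q'_def ev_add cd[symmetric]
      by (simp add: ev_monom cc ce)
  qed
  have rel: "ev x Q' = (1 - x) * ev x Q"
    using k unfolding evQ evQ' cL by simp
  define F where "F = (\<lambda>n. ((\<lambda>p. pCons 0 p + Q') ^^ n) Q)"
  have FS: "F (Suc n) = pCons 0 (F n) + Q'" for n by (simp add: F_def)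
  have evF: "ev x (F n) = ev x Q" for n
  proof (induction n)
    case 0 then show ?case by (simp add: F_def)
  next
    case (Suc n) then show ?case by (simp add: FS ev_add ev_pCons0 rel algebra_simps)
  qed
  have pQ': "poly Q' 1 \<ge> c" unfolding Q'_def by (simp add: poly_monom)
  have c0: "c > 0" using assms(2) unfolding c_def by simp
  have pF: "poly (F n) 1 = poly Q 1 + n * poly Q' 1" for n
    by (induction n) (simp_all add: F_def)
  have "strict_mono (\<lambda>n. poly (F n) (1::nat))"
    unfolding pF using pQ' c0 by (intro strict_monoI) simp
  then have "inj F" unfolding inj_def by (metis strict_mono_eq)
  then have inf: "infinite (range F)" using finite_imageD by blast
  define \<alpha> where "\<alpha> = (\<Sum>j\<in>{1..L}. \<Sum>i<j. \<beta>^(i+1)) + real_of_int A * \<beta>^(L+2)"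
  have "complex_of_real \<alpha> = ev x Q" unfolding evQ \<alpha>_def by (simp add: x_def)
  then have "range F \<subseteq> nn_polys_at (complex_of_real \<beta>) (complex_of_real \<alpha>)"
    using evF unfolding nn_polys_at_def ev_def x_def by auto
  then have "infinite (nn_polys_at (complex_of_real \<beta>) (complex_of_real \<alpha>))"
    using inf finite_subset by blast
  then show ?thesis unfolding p_count_def by auto
qed

end
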